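(* Let $G_1,\dots,G_k$ be finite connected graphs and $G=G_1\Box G_2\Box\cdots\Box G_k$ their Cartesian product. Suppose that each distance matrix $D(G_i)$, $i=1,\dots,k$, has constant row sums. Then (a) $n_-(D(G))\ge \sum_{i=1}^k n_-(D(G_i))$, and (b) $n_+(D(G))\ge 1+\sum_{i=1}^k\bigl(n_+(D(G_i))-1\bigr)$.
   Context: For a connected graph $G$ with vertices $v_1,\dots,v_n$, the distance matrix $D(G)$ is the $n\times n$ matrix with $(i,j)$ entry equal to the graph distance $d(v_i,v_j)$. For a real symmetric matrix $M$, $n_+(M)$ and $n_-(M)$ denote the numbers of positive and negative eigenvalues of $M$ counted with multiplicity. The Cartesian product $G_1\Box\cdots\Box G_k$ has vertex set $V(G_1)\times\cdots\times V(G_k)$, with $(x_1,\dots,x_k)$ adjacent to $(y_1,\dots,y_k)$ iff for some $j$, $x_j$ is adjacent to $y_j$ in $G_j$ and $x_i=y_i$ for all $i\neq j$. *)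

theory Defs
  imports "Jordan_Normal_Form.Char_Poly"
begin

definition simple_graph :: "'v set \<Rightarrow> ('v \<Rightarrow> 'v \<Rightarrow> bool) \<Rightarrow> bool" where
  "simple_graph V E \<longleftrightarrow> finite V \<and> (\<forall>u v. E u v \<longrightarrow> u \<in> V \<and> v \<in> V)
     \<and> (\<forall>u v. E u v \<longrightarrow> E v u) \<and> (\<forall>u. \<not> E u u)"

definition is_walk :: "'v set \<Rightarrow> ('v \<Rightarrow> 'v \<Rightarrow> bool) \<Rightarrow> 'v list \<Rightarrow> bool" where
  "is_walk V E xs \<longleftrightarrow> xs \<noteq> [] \<and> set xs \<subseteq> V \<and>
     (\<forall>i. Suc i < length xs \<longrightarrow> E (xs ! i) (xs ! Suc i))"

definition connected_graph :: "'v set \<Rightarrow> ('v \<Rightarrow> 'v \<Rightarrow> bool) \<Rightarrow> bool" where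
  "connected_graph V E \<longleftrightarrow> simple_graph V E \<and> V \<noteq> {} \<and>
     (\<forall>u\<in>V. \<forall>v\<in>V. \<exists>xs. is_walk V E xs \<and> hd xs = u \<and> last xs = v)"

definition gdist :: "'v set \<Rightarrow> ('v \<Rightarrow> 'v \<Rightarrow> bool) \<Rightarrow> 'v \<Rightarrow> 'v \<Rightarrow> nat" where
  "gdist V E u v = (LEAST n. \<exists>xs. is_walk V E xs \<and> hd xs = u \<and> last xs = v \<and> length xs = Suc n)"

text \<open>Distance matrix w.r.t. some fixed enumeration of the vertices (the
inertia does not depend on the chosen enumeration).\<close>

definition vertex_list :: "'v set \<Rightarrow> 'v list" where
  "vertex_list V = (SOME vs. distinct vs \<and> set vs = V)"

definition dist_matrix :: "'v set \<Rightarrow> ('v \<Rightarrow> 'v \<Rightarrow> bool) \<Rightarrow> real mat" where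
  "dist_matrix V E = (let vs = vertex_list V in
     mat (length vs) (length vs) (\<lambda>(i, j). real (gdist V E (vs ! i) (vs ! j))))"

definition const_row_sums :: "real mat \<Rightarrow> bool" where
  "const_row_sums M \<longleftrightarrow> (\<exists>c. \<forall>i < dim_row M. (\<Sum>j < dim_col M. M $$ (i, j)) = c)"

definition n_plus :: "real mat \<Rightarrow> nat" where
  "n_plus M = (\<Sum>r \<in> {r. r > 0 \<and> poly (char_poly M) r = 0}. order r (char_poly M))"

definition n_minus :: "real mat \<Rightarrow> nat" where
  "n_minus M = (\<Sum>r \<in> {r. r < 0 \<and> poly (char_poly M) r = 0}. order r (char_poly M))"

definition prod_vertices :: "nat \<Rightarrow> (nat \<Rightarrow> 'a set) \<Rightarrow> (nat \<Rightarrow> 'a) set" where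
  "prod_vertices k V = PiE {..<k} V"

definition prod_edges :: "nat \<Rightarrow> (nat \<Rightarrow> 'a set) \<Rightarrow> (nat \<Rightarrow> 'a \<Rightarrow> 'a \<Rightarrow> bool)
    \<Rightarrow> (nat \<Rightarrow> 'a) \<Rightarrow> (nat \<Rightarrow> 'a) \<Rightarrow> bool" where
  "prod_edges k V E x y \<longleftrightarrow> x \<in> prod_vertices k V \<and> y \<in> prod_vertices k V \<and>
     (\<exists>j < k. E j (x j) (y j) \<and> (\<forall>i < k. i \<noteq> j \<longrightarrow> x i = y i))"

end

theory Submission
  imports Defs "Jordan_Normal_Form.Jordan_Normal_Form_Existence"
begin

definition matX :: "'x list \<Rightarrow> ('x \<Rightarrow> 'x \<Rightarrow> real) \<Rightarrow> real mat" where
  "matX xs A = mat (length xs) (length xs) (\<lambda>(i,j). A (xs!i) (xs!j))"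

lemma matX_carrier[simp]: "matX xs A \<in> carrier_mat (length xs) (length xs)"
  by (simp add: matX_def)

lemma sum_nth_distinct:
  assumes "distinct xs"
  shows "(\<Sum>i<length xs. f (xs!i)) = (\<Sum>x\<in>set xs. f x)"
  using sum.reindex_bij_betw[OF bij_betw_nth[OF assms refl refl], of f] by simp

lemma sum_nth_distinct':
  assumes "distinct xs"
  shows "(\<Sum>i\<in>{0..<length xs}. f (xs!i)) = (\<Sum>x\<in>set xs. f x)"
  using sum_nth_distinct[OF assms] by (simp add: atLeast0LessThan)

lemma char_poly_sim:
  fixes xs :: "'x list" and ys :: "'y list"
  assumes dx: "distinct xs" and dy: "distinct ys" and len: "length xs = length ys"
  and TS: "\<And>y y'. y \<in> set ys \<Longrightarrow> y' \<in> set ys \<Longrightarrow> (\<Sum>x\<in>set xs. T y x * S x y') = (if y = y' then 1 else 0)"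
  and AS: "\<And>x y. x \<in> set xs \<Longrightarrow> y \<in> set ys \<Longrightarrow> (\<Sum>x'\<in>set xs. A x x' * S x' y) = (\<Sum>y'\<in>set ys. S x y' * B y' y)"
  shows "char_poly (matX xs A) = char_poly (matX ys B)"
proof -
  define n where "n = length xs"
  define Sm where "Sm = mat n n (\<lambda>(i,j). S (xs!i) (ys!j))"
  define Tm where "Tm = mat n n (\<lambda>(i,j). T (ys!i) (xs!j))"
  have Sm: "Sm \<in> carrier_mat n n" and Tm: "Tm \<in> carrier_mat n n" by (auto simp: Sm_def Tm_def)
  have Am: "matX xs A \<in> carrier_mat n n" and Bm: "matX ys B \<in> carrier_mat n n" using matX_carrier[of xs A] matX_carrier[of ys B] len by (auto simp: n_def)
  have TSm: "Tm * Sm = 1\<^sub>m n"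
  proof (rule eq_matI)
    fix i j assume i: "i < dim_row (1\<^sub>m n)" and j: "j < dim_col (1\<^sub>m n)"
    have "(Tm * Sm) $$ (i,j) = (\<Sum>l\<in>{0..<length xs}. T (ys!i) (xs!l) * S (xs!l) (ys!j))"
      using i j by (simp add: Sm_def Tm_def scalar_prod_def n_def)
    also have "\<dots> = (\<Sum>x\<in>set xs. T (ys!i) x * S x (ys!j))"
      by (rule sum_nth_distinct'[OF dx])
    also have "\<dots> = (1\<^sub>m n) $$ (i,j)"
      using i j TS[of "ys!i" "ys!j"] dy len by (simp add: n_def nth_eq_iff_index_eq)
    finally show "(Tm * Sm) $$ (i,j) = (1\<^sub>m n) $$ (i,j)" .
  qed (use Sm Tm in auto)
  have STm: "Sm * Tm = 1\<^sub>m n" by (rule mat_mult_left_right_inverse[OF Tm Sm TSm])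
  have ASm: "matX xs A * Sm = Sm * matX ys B"
  proof (rule eq_matI)
    fix i j assume i: "i < dim_row (Sm * matX ys B)" and j: "j < dim_col (Sm * matX ys B)"
    have i': "i < length xs" and j': "j < length xs" using i j Sm Bm by (auto simp: n_def)
    have "(matX xs A * Sm) $$ (i,j) = (\<Sum>l\<in>{0..<length xs}. A (xs!i) (xs!l) * S (xs!l) (ys!j))"
      using i' j' by (simp add: Sm_def matX_def scalar_prod_def n_def)
    also have "\<dots> = (\<Sum>x'\<in>set xs. A (xs!i) x' * S x' (ys!j))"
      by (rule sum_nth_distinct'[OF dx])
    also have "\<dots> = (\<Sum>y'\<in>set ys. S (xs!i) y' * B y' (ys!j))"
      using AS i' j' len by simp
    also have "\<dots> = (\<Sum>l\<in>{0..<length ys}. S (xs!i) (ys!l) * B (ys!l) (ys!j))"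
      by (rule sum_nth_distinct'[OF dy, symmetric])
    also have "\<dots> = (Sm * matX ys B) $$ (i,j)"
      using i' j' len by (simp add: Sm_def matX_def scalar_prod_def n_def)
    finally show "(matX xs A * Sm) $$ (i,j) = (Sm * matX ys B) $$ (i,j)" .
  qed (use Sm Am Bm in auto)
  have "Tm * matX xs A * Sm = Tm * (matX xs A * Sm)"
    using Tm Am Sm by (simp add: assoc_mult_mat)
  also have "\<dots> = Tm * (Sm * matX ys B)" by (simp add: ASm)
  also have "\<dots> = (Tm * Sm) * matX ys B" using Tm Sm Bm by (simp add: assoc_mult_mat)
  also have "\<dots> = matX ys B" using TSm Bm by simp
  finally have eq: "matX ys B = Tm * matX xs A * Sm" by simp
  have "similar_mat_wit (matX ys B) (matX xs A) Tm Sm"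
    unfolding similar_mat_wit_def Let_def using Am Bm Sm Tm TSm STm eq
    by (auto simp: n_def len)
  hence "similar_mat (matX ys B) (matX xs A)" unfolding similar_mat_def by blast
  from char_poly_similar[OF this] show ?thesis by simp
qed

lemma char_poly_matX_append:
  assumes Z: "\<And>y y'. y \<in> set ys1 \<Longrightarrow> y' \<in> set ys2 \<Longrightarrow> B y y' = 0"
  shows "char_poly (matX (ys1 @ ys2) B) = char_poly (matX ys1 B) * char_poly (matX ys2 B)"
proof -
  let ?n = "length ys1" let ?m = "length ys2"
  let ?A1 = "matX ys1 B" let ?A4 = "matX ys2 B"
  let ?A3 = "mat ?m ?n (\<lambda>(i,j). B (ys2!i) (ys1!j))"
  have eq: "matX (ys1@ys2) B = four_block_mat ?A1 (0\<^sub>m ?n ?m) ?A3 ?A4"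
    by (rule eq_matI, auto simp: matX_def four_block_mat_def Let_def nth_append intro!: Z)
  let ?cm = "\<lambda> A. [:0, 1:] \<cdot>\<^sub>m 1\<^sub>m (dim_row A) + map_mat (\<lambda>a. [:- a:]) A"
  have "char_poly (matX (ys1@ys2) B) = det (?cm (four_block_mat ?A1 (0\<^sub>m ?n ?m) ?A3 ?A4))"
    unfolding char_poly_defs eq by simp
  also have "?cm (four_block_mat ?A1 (0\<^sub>m ?n ?m) ?A3 ?A4) =
     four_block_mat (?cm ?A1) (0\<^sub>m ?n ?m) (map_mat (\<lambda>a. [:- a:]) ?A3) (?cm ?A4)"
    by (rule eq_matI, auto simp: one_poly_def four_block_mat_def Let_def matX_def)
  also have "det \<dots> = det (?cm ?A1) * det (?cm ?A4)"
    by (rule det_four_block_mat_upper_right_zero[of _ ?n _ ?m], auto simp: matX_def)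
  also have "\<dots> = char_poly ?A1 * char_poly ?A4" unfolding char_poly_defs ..
  finally show ?thesis .
qed

lemma char_poly_matX_concat:
  assumes "\<And>p q y y'. p < q \<Longrightarrow> q < length yss \<Longrightarrow> y \<in> set (yss!p) \<Longrightarrow> y' \<in> set (yss!q) \<Longrightarrow> B y y' = 0"
  shows "char_poly (matX (concat yss) B) = (\<Prod>ys\<leftarrow>yss. char_poly (matX ys B))"
  using assms
proof (induction yss)
  case Nil
  then show ?case by (simp add: char_poly_defs matX_def det_def)
next
  case (Cons ys yss)
  have IH: "char_poly (matX (concat yss) B) = (\<Prod>ys\<leftarrow>yss. char_poly (matX ys B))"
    by (rule Cons.IH, rule Cons.prems[of "Suc p" "Suc q" for p q], auto)
  have "char_poly (matX (ys @ concat yss) B) = char_poly (matX ys B) * char_poly (matX (concat yss) B)"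
  proof (rule char_poly_matX_append)
    fix y y' assume y: "y \<in> set ys" and y': "y' \<in> set (concat yss)"
    then obtain q where q: "q < length yss" "y' \<in> set (yss!q)" by (metis in_set_conv_nth set_concat UN_E)
    show "B y y' = 0" by (rule Cons.prems[of 0 "Suc q"], use y q in auto)
  qed
  then show ?case using IH by simp
qed

definition cnt :: "(real \<Rightarrow> bool) \<Rightarrow> real poly \<Rightarrow> nat" where
  "cnt P p = (\<Sum>r\<in>{r. P r \<and> poly p r = 0}. order r p)"

lemma n_minus_cnt: "n_minus M = cnt (\<lambda>r. r < 0) (char_poly M)"
  by (simp add: n_minus_def cnt_def)
lemma n_plus_cnt: "n_plus M = cnt (\<lambda>r. r > 0) (char_poly M)"
  by (simp add: n_plus_def cnt_def)

lemma char_poly_nz: assumes "A \<in> carrier_mat n n" shows "char_poly A \<noteq> 0"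
  using degree_monic_char_poly[OF assms] by auto

lemma cnt_superset:
  assumes p: "p \<noteq> 0" and S: "finite S" "{r. P r \<and> poly p r = 0} \<subseteq> S" "\<And>r. r \<in> S \<Longrightarrow> P r"
  shows "cnt P p = (\<Sum>r\<in>S. order r p)"
  unfolding cnt_def
proof (rule sum.mono_neutral_left[OF S(1) S(2)])
  show "\<forall>i\<in>S - {r. P r \<and> poly p r = 0}. order i p = 0"
    using S(3) p by (auto simp: order_root)
qed

lemma cnt_mult:
  assumes p: "p \<noteq> 0" and q: "q \<noteq> 0"
  shows "cnt P (p * q) = cnt P p + cnt P q"
proof -
  let ?S = "{r. P r \<and> poly (p*q) r = 0}"
  have pq: "p * q \<noteq> 0" using p q by simp
  have fin: "finite ?S" using poly_roots_finite[OF pq] by (rule rev_finite_subset) auto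
  have "cnt P (p*q) = (\<Sum>r\<in>?S. order r p + order r q)"
    unfolding cnt_def using order_mult[OF pq] by simp
  also have "\<dots> = cnt P p + cnt P q"
  proof -
    have "cnt P p = (\<Sum>r\<in>?S. order r p)" by (rule cnt_superset[OF p fin], auto)
    moreover have "cnt P q = (\<Sum>r\<in>?S. order r q)" by (rule cnt_superset[OF q fin], auto)
    ultimately show ?thesis by (simp add: sum.distrib)
  qed
  finally show ?thesis .
qed

lemma cnt_prod_list:
  assumes "\<And>p. p \<in> set ps \<Longrightarrow> p \<noteq> 0"
  shows "cnt P (prod_list ps) = (\<Sum>p\<leftarrow>ps. cnt P p)"
  using assms
proof (induction ps)
  case Nil
  then show ?case by (simp add: cnt_def)
next
  case (Cons p ps)
  have "prod_list ps \<noteq> 0" using Cons.prems by (auto simp: prod_list_zero_iff)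
  then show ?case using Cons by (simp add: cnt_mult)
qed

lemma cnt_linear: "cnt P [:-c,1:] = (if P c then 1 else 0)"
proof -
  have "{r. P r \<and> poly [:-c,1:] r = 0} = (if P c then {c} else {})" by auto
  moreover have "order c [:-c,1:] = 1"
    using order_power_n_n[of c 1] by simp
  ultimately show ?thesis unfolding cnt_def by simp
qed

lemma order_char_poly_smult_real:
  fixes A :: "real mat"
  assumes A: "A \<in> carrier_mat n n" and k: "k \<noteq> 0"
  shows "order x (char_poly (k \<cdot>\<^sub>m A)) = order (x / k) (char_poly A)"
proof -
  interpret h: map_poly_inj_idom_divide_hom complex_of_real ..
  let ?Ac = "map_mat complex_of_real A"
  have Ac: "?Ac \<in> carrier_mat n n" using A by simp
  have kA: "k \<cdot>\<^sub>m A \<in> carrier_mat n n" using A by simp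
  have "order x (char_poly (k \<cdot>\<^sub>m A)) = order (complex_of_real x) (map_poly complex_of_real (char_poly (k \<cdot>\<^sub>m A)))"
    by (rule h.order_hom[symmetric])
  also have "map_poly complex_of_real (char_poly (k \<cdot>\<^sub>m A)) = char_poly (map_mat complex_of_real (k \<cdot>\<^sub>m A))"
    by (rule of_real_hom.char_poly_hom[symmetric, OF kA])
  also have "map_mat complex_of_real (k \<cdot>\<^sub>m A) = of_real k \<cdot>\<^sub>m ?Ac"
    by (rule eq_matI, auto)
  also have "order (complex_of_real x) (char_poly (of_real k \<cdot>\<^sub>m ?Ac)) = order (of_real x / of_real k) (char_poly ?Ac)"
    by (rule order_char_poly_smult[OF Ac], use k in simp)
  also have "char_poly ?Ac = map_poly complex_of_real (char_poly A)"
    by (rule of_real_hom.char_poly_hom[OF A])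
  also have "of_real x / of_real k = (of_real (x / k) :: complex)" by simp
  also have "order (of_real (x/k)) (map_poly complex_of_real (char_poly A)) = order (x/k) (char_poly A)"
    by (rule h.order_hom)
  finally show ?thesis .
qed

lemma cnt_char_poly_smult:
  fixes A :: "real mat"
  assumes A: "A \<in> carrier_mat n n" and c: "c > 0"
  and PQ: "\<And>r. Q (c*r) = P r"
  shows "cnt Q (char_poly (c \<cdot>\<^sub>m A)) = cnt P (char_poly A)"
proof -
  have kA: "c \<cdot>\<^sub>m A \<in> carrier_mat n n" using A by simp
  note nz1 = char_poly_nz[OF kA] and nz2 = char_poly_nz[OF A]
  have ord: "order (c*s) (char_poly (c \<cdot>\<^sub>m A)) = order s (char_poly A)" for s
    using order_char_poly_smult_real[OF A, of c "c*s"] c by simp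
  let ?SA = "{r. P r \<and> poly (char_poly A) r = 0}"
  let ?SB = "{r. Q r \<and> poly (char_poly (c \<cdot>\<^sub>m A)) r = 0}"
  have img: "?SB = (\<lambda>s. c*s) ` ?SA"
  proof (intro equalityI subsetI)
    fix r assume r: "r \<in> ?SB"
    have "r = c * (r / c)" using c by simp
    moreover have "r / c \<in> ?SA" using r ord[of "r/c"] PQ[of "r/c"] c nz1 nz2
      by (auto simp: order_root)
    ultimately show "r \<in> (\<lambda>s. c*s) ` ?SA" by blast
  next
    fix r assume "r \<in> (\<lambda>s. c*s) ` ?SA"
    then obtain s where "s \<in> ?SA" "r = c*s" by blast
    then show "r \<in> ?SB" using ord[of s] PQ[of s] nz1 nz2 by (auto simp: order_root)
  qed
  have inj: "inj_on (\<lambda>s. c*s) ?SA" using c by (auto intro: inj_onI)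
  have "cnt Q (char_poly (c \<cdot>\<^sub>m A)) = (\<Sum>r\<in>(\<lambda>s. c*s) ` ?SA. order r (char_poly (c \<cdot>\<^sub>m A)))"
    unfolding cnt_def img ..
  also have "\<dots> = (\<Sum>s\<in>?SA. order (c*s) (char_poly (c \<cdot>\<^sub>m A)))"
    by (rule sum.reindex[OF inj, unfolded comp_def])
  also have "\<dots> = cnt P (char_poly A)" unfolding cnt_def ord ..
  finally show ?thesis .
qed

lemma walk_single: "v \<in> V \<Longrightarrow> is_walk V E [v]" by (simp add: is_walk_def)

lemma walk_tl: "is_walk V E (a # b # xs) \<Longrightarrow> is_walk V E (b # xs) \<and> E a b \<and> a \<in> V"
proof -
  assume w: "is_walk V E (a # b # xs)"
  have "E ((a#b#xs) ! 0) ((a#b#xs) ! Suc 0)" using w unfolding is_walk_def by (metis length_Cons zero_less_Suc Suc_less_eq)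
  hence "E a b" by simp
  moreover have "is_walk V E (b # xs)" unfolding is_walk_def
  proof (intro conjI allI impI)
    show "b#xs \<noteq> []" by simp
    show "set (b#xs) \<subseteq> V" using w by (simp add: is_walk_def)
    fix i assume "Suc i < length (b#xs)"
    then have "Suc (Suc i) < length (a#b#xs)" by simp
    with w have "E ((a#b#xs) ! Suc i) ((a#b#xs) ! Suc (Suc i))" unfolding is_walk_def by blast
    then show "E ((b#xs)!i) ((b#xs)!Suc i)" by simp
  qed
  ultimately show ?thesis using w by (simp add: is_walk_def)
qed

lemma walk_Cons: "is_walk V E (b # xs) \<Longrightarrow> E a b \<Longrightarrow> a \<in> V \<Longrightarrow> is_walk V E (a # b # xs)"
  unfolding is_walk_def
  by (auto simp: nth_Cons split: nat.splits)

lemma walk_append: "is_walk V E xs \<Longrightarrow> is_walk V E ys \<Longrightarrow> last xs = hd ys \<Longrightarrow> is_walk V E (xs @ tl ys)"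
proof (induction xs rule: induct_list012)
  case 1
  then show ?case by (simp add: is_walk_def)
next
  case (2 a)
  then show ?case by (cases ys, auto simp: is_walk_def)
next
  case (3 a b zs)
  from walk_tl[OF "3.prems"(1)] have w: "is_walk V E (b # zs)" "E a b" "a \<in> V" by auto
  have "is_walk V E ((b # zs) @ tl ys)" using 3 w by simp
  then show ?case using walk_Cons[of V E b "zs @ tl ys" a] w by simp
qed

lemma gdist_le: "is_walk V E xs \<Longrightarrow> hd xs = u \<Longrightarrow> last xs = v \<Longrightarrow> gdist V E u v \<le> length xs - 1"
proof -
  assume a: "is_walk V E xs" "hd xs = u" "last xs = v"
  then have "length xs = Suc (length xs - 1)" by (cases xs, auto simp: is_walk_def)
  with a have "\<exists>ys. is_walk V E ys \<and> hd ys = u \<and> last ys = v \<and> length ys = Suc (length xs - 1)" by blast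
  then show ?thesis unfolding gdist_def by (rule Least_le)
qed

lemma gdist_ex_gen: "\<exists>xs. is_walk V E xs \<and> hd xs = u \<and> last xs = v \<Longrightarrow>
   \<exists>xs. is_walk V E xs \<and> hd xs = u \<and> last xs = v \<and> length xs = Suc (gdist V E u v)"
proof -
  assume "\<exists>xs. is_walk V E xs \<and> hd xs = u \<and> last xs = v"
  then obtain xs where xs: "is_walk V E xs" "hd xs = u" "last xs = v" by blast
  then have "length xs = Suc (length xs - 1)" by (cases xs, auto simp: is_walk_def)
  with xs have "\<exists>ys. is_walk V E ys \<and> hd ys = u \<and> last ys = v \<and> length ys = Suc (length xs - 1)" by blast
  then show ?thesis unfolding gdist_def by (rule LeastI)
qed

lemma gdist_ex: "connected_graph V E \<Longrightarrow> u \<in> V \<Longrightarrow> v \<in> V \<Longrightarrow>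
   \<exists>xs. is_walk V E xs \<and> hd xs = u \<and> last xs = v \<and> length xs = Suc (gdist V E u v)"
  by (rule gdist_ex_gen, auto simp: connected_graph_def)

lemma gdist_refl: "v \<in> V \<Longrightarrow> gdist V E v v = 0"
  using gdist_le[OF walk_single[of v V E]] by simp

lemma gdist_step:
  assumes c: "connected_graph V E" and ab: "E a b" and w: "w \<in> V"
  shows "gdist V E a w \<le> Suc (gdist V E b w)"
proof -
  have sg: "simple_graph V E" using c by (simp add: connected_graph_def)
  have ab': "a \<in> V" "b \<in> V" using sg ab by (auto simp: simple_graph_def)
  obtain xs where xs: "is_walk V E xs" "hd xs = b" "last xs = w" "length xs = Suc (gdist V E b w)"
    using gdist_ex[OF c ab'(2) w] by blast
  then obtain zs where zs: "xs = b # zs" by (cases xs, auto)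
  have "is_walk V E (a # xs)" using walk_Cons[of V E b zs a] xs ab ab' zs by simp
  from gdist_le[OF this, of a w] xs zs show ?thesis by simp
qed

lemma prod_walk_lower:
  assumes conn: "\<And>i. i < k \<Longrightarrow> connected_graph (V i) (E i)"
  shows "is_walk (prod_vertices k V) (prod_edges k V E) xs \<Longrightarrow>
    (\<Sum>j<k. gdist (V j) (E j) (hd xs j) (last xs j)) \<le> length xs - 1"
proof (induction xs rule: induct_list012)
  case 1
  then show ?case by (simp add: is_walk_def)
next
  case (2 a)
  then have "a \<in> prod_vertices k V" by (simp add: is_walk_def)
  then show ?case by (simp add: gdist_refl prod_vertices_def PiE_iff)
next
  case (3 a b zs)
  from walk_tl[OF "3.prems"] have w: "is_walk (prod_vertices k V) (prod_edges k V E) (b # zs)"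
    and e: "prod_edges k V E a b" by auto
  let ?l = "last (b # zs)"
  have l: "?l \<in> prod_vertices k V" using w unfolding is_walk_def by (metis last_in_set list.distinct(1) subsetD)
  from e obtain j0 where j0: "j0 < k" "E j0 (a j0) (b j0)" "\<And>i. i < k \<Longrightarrow> i \<noteq> j0 \<Longrightarrow> a i = b i"
    unfolding prod_edges_def by blast
  have "(\<Sum>j<k. gdist (V j) (E j) (a j) (?l j)) \<le> (\<Sum>j<k. gdist (V j) (E j) (b j) (?l j) + (if j = j0 then 1 else 0))"
  proof (rule sum_mono)
    fix j assume j: "j \<in> {..<k}"
    show "gdist (V j) (E j) (a j) (?l j) \<le> gdist (V j) (E j) (b j) (?l j) + (if j = j0 then 1 else 0)"
    proof (cases "j = j0")
      case True
      have "?l j \<in> V j" using l j by (auto simp: prod_vertices_def PiE_iff)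
      then show ?thesis using gdist_step[OF conn j0(2)] True j0(1) by simp
    next
      case False
      then show ?thesis using j0(3)[of j] j by simp
    qed
  qed
  also have "\<dots> = (\<Sum>j<k. gdist (V j) (E j) (b j) (?l j)) + 1"
    using j0(1) by (simp add: sum.distrib)
  finally show ?case using "3.IH"(2)[OF w] by simp
qed

lemma prod_walk_upper:
  assumes conn: "\<And>i. i < k \<Longrightarrow> connected_graph (V i) (E i)"
  and x: "x \<in> prod_vertices k V" and y: "y \<in> prod_vertices k V"
  shows "\<exists>xs. is_walk (prod_vertices k V) (prod_edges k V E) xs \<and> hd xs = x \<and> last xs = y
     \<and> length xs = Suc (\<Sum>j<k. gdist (V j) (E j) (x j) (y j))"
proof -
  let ?PV = "prod_vertices k V" and ?PE = "prod_edges k V E"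
  define z where "z m = (\<lambda>j. if j < m then y j else x j)" for m
  have zP: "m \<le> k \<Longrightarrow> z m \<in> ?PV" for m
    using x y unfolding z_def prod_vertices_def by (auto simp: PiE_iff extensional_def)
  have "m \<le> k \<Longrightarrow> \<exists>xs. is_walk ?PV ?PE xs \<and> hd xs = x \<and> last xs = z m
     \<and> length xs = Suc (\<Sum>j<m. gdist (V j) (E j) (x j) (y j))" for m
  proof (induction m)
    case 0
    have "z 0 = x" by (simp add: z_def)
    then show ?case using walk_single[OF x, of ?PE] by (intro exI[of _ "[x]"], simp)
  next
    case (Suc m)
    then obtain xs where xs: "is_walk ?PV ?PE xs" "hd xs = x" "last xs = z m"
       "length xs = Suc (\<Sum>j<m. gdist (V j) (E j) (x j) (y j))" by auto
    have m: "m < k" using Suc.prems by simp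
    have xm: "x m \<in> V m" "y m \<in> V m" using x y m by (auto simp: prod_vertices_def PiE_iff)
    obtain ws where ws: "is_walk (V m) (E m) ws" "hd ws = x m" "last ws = y m"
      "length ws = Suc (gdist (V m) (E m) (x m) (y m))" using gdist_ex[OF conn[OF m] xm] by blast
    define ls where "ls = map (\<lambda>v. (z m)(m := v)) ws"
    have zm: "z m m = x m" by (simp add: z_def)
    have ws0: "ws \<noteq> []" using ws by (simp add: is_walk_def)
    have updP: "v \<in> V m \<Longrightarrow> (z m)(m := v) \<in> ?PV" for v
      using zP[of m] m unfolding prod_vertices_def by (auto simp: PiE_iff extensional_def)
    have lw: "is_walk ?PV ?PE ls"
      unfolding is_walk_def
    proof (intro conjI allI impI)
      show "ls \<noteq> []" using ws0 by (simp add: ls_def)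
      show "set ls \<subseteq> ?PV" using ws updP by (auto simp: ls_def is_walk_def)
      fix i assume i: "Suc i < length ls"
      have e: "E m (ws ! i) (ws ! Suc i)" using ws i by (simp add: is_walk_def ls_def)
      have v: "ws ! i \<in> V m" "ws ! Suc i \<in> V m" using ws i by (auto simp: is_walk_def ls_def)
      show "?PE (ls ! i) (ls ! Suc i)"
        unfolding prod_edges_def using i e m updP[OF v(1)] updP[OF v(2)]
        by (auto simp: ls_def intro!: exI[of _ m])
    qed
    have hl: "hd ls = z m" using ws ws0 zm by (auto simp: ls_def hd_map)
    have ll: "last ls = z (Suc m)" using ws ws0 by (auto simp: ls_def last_map z_def)
    have "is_walk ?PV ?PE (xs @ tl ls)" by (rule walk_append[OF xs(1) lw], simp add: xs hl)
    moreover have "hd (xs @ tl ls) = x" using xs by (cases xs, auto simp: is_walk_def)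
    moreover have "last (xs @ tl ls) = z (Suc m)"
    proof (cases "tl ls = []")
      case True
      then have "ls = [hd ls]" using ws0 by (cases ls, auto simp: ls_def)
      then show ?thesis using True xs hl ll by (metis append.right_neutral last.simps)
    next
      case False
      then show ?thesis using ll ws0 by (cases ls, auto simp: ls_def)
    qed
    moreover have "length (xs @ tl ls) = Suc (\<Sum>j<Suc m. gdist (V j) (E j) (x j) (y j))"
      using xs ws by (simp add: ls_def)
    ultimately show ?case by blast
  qed
  from this[of k] have "\<exists>xs. is_walk ?PV ?PE xs \<and> hd xs = x \<and> last xs = z k
     \<and> length xs = Suc (\<Sum>j<k. gdist (V j) (E j) (x j) (y j))" by simp
  moreover have "z k = y" using x y unfolding z_def prod_vertices_def by (auto simp: PiE_iff fun_eq_iff extensional_def)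
  ultimately show ?thesis by simp
qed

lemma gdist_prod:
  assumes conn: "\<And>i. i < k \<Longrightarrow> connected_graph (V i) (E i)"
  and x: "x \<in> prod_vertices k V" and y: "y \<in> prod_vertices k V"
  shows "gdist (prod_vertices k V) (prod_edges k V E) x y = (\<Sum>j<k. gdist (V j) (E j) (x j) (y j))"
proof -
  from prod_walk_upper[OF conn x y] obtain xs where xs:
    "is_walk (prod_vertices k V) (prod_edges k V E) xs" "hd xs = x" "last xs = y"
    "length xs = Suc (\<Sum>j<k. gdist (V j) (E j) (x j) (y j))" by blast
  have le: "gdist (prod_vertices k V) (prod_edges k V E) x y \<le> (\<Sum>j<k. gdist (V j) (E j) (x j) (y j))"
    using gdist_le[OF xs(1-3)] xs(4) by simp
  from gdist_ex_gen[of "prod_vertices k V" "prod_edges k V E" x y] xs obtain ys where ys: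
    "is_walk (prod_vertices k V) (prod_edges k V E) ys" "hd ys = x" "last ys = y"
    "length ys = Suc (gdist (prod_vertices k V) (prod_edges k V E) x y)" by blast
  from prod_walk_lower[OF conn ys(1)] ys have "(\<Sum>j<k. gdist (V j) (E j) (x j) (y j)) \<le> gdist (prod_vertices k V) (prod_edges k V E) x y"
    by simp
  with le show ?thesis by simp
qed

definition ind :: "'a \<Rightarrow> 'a \<Rightarrow> real" where "ind v y = (if y = v then 1 else 0)"

definition fb :: "'a \<Rightarrow> 'a \<Rightarrow> 'a \<Rightarrow> real" where
  "fb b0 v y = (if v = b0 then 1 else ind v y - ind b0 y)"
definition gb :: "'a set \<Rightarrow> 'a \<Rightarrow> 'a \<Rightarrow> 'a \<Rightarrow> real" where
  "gb V b0 v y = (if v = b0 then 1 / real (card V) else ind v y - 1 / real (card V))"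
definition Bf :: "'a set \<Rightarrow> 'a \<Rightarrow> ('a \<Rightarrow> 'a \<Rightarrow> real) \<Rightarrow> 'a \<Rightarrow> 'a \<Rightarrow> real" where
  "Bf V b0 d v w = (\<Sum>y\<in>V. gb V b0 v y * (\<Sum>z\<in>V. d y z * fb b0 w z))"

lemma sum_ind: "finite V \<Longrightarrow> v \<in> V \<Longrightarrow> (\<Sum>y\<in>V. ind v y * h y) = h v"
proof -
  assume "finite V" "v \<in> V"
  have "(\<Sum>y\<in>V. ind v y * h y) = (\<Sum>y\<in>V. if y = v then h y else 0)" by (rule sum.cong, auto simp: ind_def)
  then show ?thesis using \<open>finite V\<close> \<open>v \<in> V\<close> by (simp add: sum.delta')
qed
lemma sum_ind': "finite V \<Longrightarrow> v \<in> V \<Longrightarrow> (\<Sum>y\<in>V. h y * ind v y) = h v"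
  using sum_ind[of V v h] by (simp add: mult.commute)
lemma sum_ind1: "finite V \<Longrightarrow> v \<in> V \<Longrightarrow> (\<Sum>y\<in>V. ind v y) = 1"
  using sum_ind[of V v "\<lambda>_. 1"] by simp

lemma card_pos_real: "finite V \<Longrightarrow> b0 \<in> V \<Longrightarrow> real (card V) > 0"
  using card_gt_0_iff by auto

lemma F1:
  assumes fin: "finite V" and b0: "b0 \<in> V" and v: "v \<in> V" and w: "w \<in> V"
  shows "(\<Sum>y\<in>V. gb V b0 v y * fb b0 w y) = (if v = w then 1 else 0)"
proof -
  let ?n = "real (card V)"
  have n: "?n > 0" using card_pos_real[OF fin b0] .
  have s1: "(\<Sum>y\<in>V. (1::real)) = ?n" by simp
  show ?thesis
  proof (cases "v = b0")
    case vb: True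
    show ?thesis
    proof (cases "w = b0")
      case True
      then show ?thesis using vb n by (simp add: gb_def fb_def)
    next
      case False
      have "(\<Sum>y\<in>V. gb V b0 v y * fb b0 w y) = (1/?n) * ((\<Sum>y\<in>V. ind w y) - (\<Sum>y\<in>V. ind b0 y))"
        using vb False by (simp add: gb_def fb_def sum_distrib_left sum_subtractf right_diff_distrib)
      then show ?thesis using vb False sum_ind1[OF fin w] sum_ind1[OF fin b0] by simp
    qed
  next
    case vb: False
    show ?thesis
    proof (cases "w = b0")
      case True
      have "(\<Sum>y\<in>V. gb V b0 v y * fb b0 w y) = (\<Sum>y\<in>V. ind v y) - ?n * (1/?n)"
        using vb True by (simp add: gb_def fb_def sum_subtractf)
      then show ?thesis using vb True sum_ind1[OF fin v] n by simp
    next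
      case False
      have "(\<Sum>y\<in>V. gb V b0 v y * fb b0 w y) =
         (\<Sum>y\<in>V. ind v y * ind w y) - (\<Sum>y\<in>V. ind v y * ind b0 y) - (1/?n) * (\<Sum>y\<in>V. ind w y) + (1/?n) * (\<Sum>y\<in>V. ind b0 y)"
        using vb False by (simp add: gb_def fb_def sum_subtractf sum.distrib sum_distrib_left algebra_simps sum_divide_distrib[symmetric])
      also have "\<dots> = ind w v - ind b0 v"
        using sum_ind[OF fin v, of "ind w"] sum_ind[OF fin v, of "ind b0"] sum_ind1[OF fin w] sum_ind1[OF fin b0] by simp
      finally show ?thesis using vb by (simp add: ind_def)
    qed
  qed
qed

lemma F2:
  assumes fin: "finite V" and b0: "b0 \<in> V" and x: "x \<in> V" and y: "y \<in> V"
  shows "(\<Sum>v\<in>V. fb b0 v x * gb V b0 v y) = (if x = y then 1 else 0)"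
proof -
  let ?n = "real (card V)"
  have n: "?n > 0" using card_pos_real[OF fin b0] .
  have cV: "card (V - {b0}) = card V - 1" using b0 fin by simp
  have c1: "card V \<ge> 1" using fin b0 by (metis One_nat_def Suc_leI card_gt_0_iff empty_iff)
  have cV': "real (card (V - {b0})) = ?n - 1" using cV c1 by (simp add: of_nat_diff)
  have split: "(\<Sum>v\<in>V. fb b0 v x * gb V b0 v y) = 1/?n + (\<Sum>v\<in>V-{b0}. (ind v x - ind b0 x) * (ind v y - 1/?n))"
  proof -
    have "(\<Sum>v\<in>V. fb b0 v x * gb V b0 v y) = fb b0 b0 x * gb V b0 b0 y + (\<Sum>v\<in>V-{b0}. fb b0 v x * gb V b0 v y)"
      by (rule sum.remove[OF fin b0])
    also have "(\<Sum>v\<in>V-{b0}. fb b0 v x * gb V b0 v y) = (\<Sum>v\<in>V-{b0}. (ind v x - ind b0 x) * (ind v y - 1/?n))"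
      by (rule sum.cong, auto simp: fb_def gb_def)
    finally show ?thesis by (simp add: fb_def gb_def)
  qed
  show ?thesis
  proof (cases "x = b0")
    case True
    have "(\<Sum>v\<in>V-{b0}. (ind v x - ind b0 x) * (ind v y - 1/?n)) = (\<Sum>v\<in>V-{b0}. 1/?n - ind v y)"
      using True by (intro sum.cong, auto simp: ind_def)
    also have "\<dots> = (?n - 1) / ?n - (\<Sum>v\<in>V-{b0}. ind v y)"
      using cV' by (simp add: sum_subtractf)
    also have "(\<Sum>v\<in>V-{b0}. ind v y) = (if y = b0 then 0 else 1)"
      using fin y by (auto simp: ind_def sum.If_cases)
    finally show ?thesis using split True n by (auto simp: field_simps)
  next
    case False
    have "(\<Sum>v\<in>V-{b0}. (ind v x - ind b0 x) * (ind v y - 1/?n)) = (\<Sum>v\<in>V-{b0}. ind x v * (ind y x - 1/?n))"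
      using False by (intro sum.cong, auto simp: ind_def)
    also have "\<dots> = ind y x - 1/?n" using sum_ind[of "V-{b0}" x "\<lambda>v. ind y x - 1/?n"] False fin x
      by (simp add: ind_def)
    finally show ?thesis using split by (auto simp: ind_def)
  qed
qed

lemma F3:
  assumes fin: "finite V" and b0: "b0 \<in> V" and w: "w \<in> V"
  shows "(\<Sum>y\<in>V. fb b0 w y) = (if w = b0 then real (card V) else 0)"
  using sum_ind1[OF fin w] sum_ind1[OF fin b0] by (simp add: fb_def sum_subtractf)

lemma F4:
  assumes fin: "finite V" and b0: "b0 \<in> V" and x: "x \<in> V" and w: "w \<in> V"
  shows "(\<Sum>z\<in>V. d x z * fb b0 w z) = (\<Sum>v\<in>V. fb b0 v x * Bf V b0 d v w)"
proof -
  let ?D = "\<lambda>y. (\<Sum>z\<in>V. d y z * fb b0 w z)"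
  have "(\<Sum>v\<in>V. fb b0 v x * Bf V b0 d v w) = (\<Sum>v\<in>V. \<Sum>y\<in>V. fb b0 v x * gb V b0 v y * ?D y)"
    by (simp add: Bf_def sum_distrib_left mult.assoc)
  also have "\<dots> = (\<Sum>y\<in>V. \<Sum>v\<in>V. fb b0 v x * gb V b0 v y * ?D y)" by (rule sum.swap)
  also have "\<dots> = (\<Sum>y\<in>V. (\<Sum>v\<in>V. fb b0 v x * gb V b0 v y) * ?D y)" by (simp add: sum_distrib_right)
  also have "\<dots> = (\<Sum>y\<in>V. ind x y * ?D y)" using F2[OF fin b0 x] by (intro sum.cong, auto simp: ind_def)
  also have "\<dots> = ?D x" by (rule sum_ind[OF fin x])
  finally show ?thesis by simp
qed

lemma F5:
  assumes fin: "finite V" and b0: "b0 \<in> V" and v: "v \<in> V"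
  and rs: "\<And>y. y \<in> V \<Longrightarrow> (\<Sum>z\<in>V. d y z) = r"
  shows "Bf V b0 d v b0 = (if v = b0 then r else 0)"
proof -
  have "Bf V b0 d v b0 = (\<Sum>y\<in>V. gb V b0 v y * r)" unfolding Bf_def using rs by (simp add: fb_def)
  also have "\<dots> = r * (\<Sum>y\<in>V. gb V b0 v y)" by (simp add: sum_distrib_left mult.commute)
  also have "(\<Sum>y\<in>V. gb V b0 v y) = (if v = b0 then 1 else 0)"
    using sum_ind1[OF fin v] card_pos_real[OF fin b0] by (auto simp: gb_def sum_subtractf)
  finally show ?thesis by simp
qed

lemma vertex_list: "finite V \<Longrightarrow> distinct (vertex_list V) \<and> set (vertex_list V) = V"
  unfolding vertex_list_def by (rule someI_ex, rule finite_distinct_list[of V, THEN exE], auto)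

lemma char_poly_1x1: "char_poly (matX [y] B) = [:- B y y, 1:]"
proof -
  have c: "matX [y] B \<in> carrier_mat 1 1" by (simp add: matX_def)
  have ut: "upper_triangular (matX [y] B)" by (simp add: upper_triangular_def matX_def)
  have "diag_mat (matX [y] B) = [B y y]" by (simp add: diag_mat_def matX_def)
  then show ?thesis using char_poly_upper_triangular[OF c ut] by simp
qed

lemma factor_char_poly:
  assumes fin: "finite V" and b0: "b0 \<in> V"
  and rs: "\<And>y. y \<in> V \<Longrightarrow> (\<Sum>z\<in>V. d y z) = r"
  and xs: "distinct xs" "set xs = V" and ws: "distinct ws" "set ws = V - {b0}"
  shows "char_poly (matX xs d) = char_poly (matX ws (Bf V b0 d)) * [:-r, 1:]"
proof -
  have ys: "distinct (ws @ [b0])" "set (ws @ [b0]) = V" using ws b0 by auto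
  have len: "length xs = length (ws @ [b0])"
    using distinct_card[OF xs(1)] distinct_card[OF ys(1)] xs(2) ys(2) by simp
  have "char_poly (matX xs d) = char_poly (matX (ws @ [b0]) (Bf V b0 d))"
  proof (rule char_poly_sim[OF xs(1) ys(1) len, where T = "gb V b0" and S = "\<lambda>x w. fb b0 w x"])
    fix y y' assume yy: "y \<in> set (ws @ [b0])" "y' \<in> set (ws @ [b0])"
    then have "y \<in> V" "y' \<in> V" using ys(2) by auto
    then show "(\<Sum>x\<in>set xs. gb V b0 y x * fb b0 y' x) = (if y = y' then 1 else 0)"
      using F1[OF fin b0] xs(2) by simp
  next
    fix x y assume "x \<in> set xs" "y \<in> set (ws @ [b0])"
    then have "x \<in> V" "y \<in> V" using ys(2) xs(2) by auto
    then show "(\<Sum>x'\<in>set xs. d x x' * fb b0 y x') = (\<Sum>y'\<in>set (ws @ [b0]). fb b0 y' x * Bf V b0 d y' y)"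
      using F4[OF fin b0] ys(2) xs(2) by simp
  qed
  also have "\<dots> = char_poly (matX ws (Bf V b0 d)) * char_poly (matX [b0] (Bf V b0 d))"
  proof (rule char_poly_matX_append)
    fix y y' assume "y \<in> set ws" "y' \<in> set [b0]"
    then show "Bf V b0 d y y' = 0" using F5[OF fin b0 _ rs] ws by auto
  qed
  also have "char_poly (matX [b0] (Bf V b0 d)) = [:-r, 1:]"
    unfolding char_poly_1x1 using F5[OF fin b0 b0 rs] by simp
  finally show ?thesis .
qed

lemma sum_PiE_prod_one:
  fixes F :: "'i \<Rightarrow> 'b \<Rightarrow> real" and G :: "'b \<Rightarrow> real"
  assumes fin: "finite I" and finW: "\<And>j. j \<in> I \<Longrightarrow> finite (W j)" and i: "i \<in> I"
  shows "(\<Sum>a\<in>PiE I W. (\<Prod>j\<in>I. F j (a j)) * G (a i)) = (\<Sum>w\<in>W i. F i w * G w) * (\<Prod>j\<in>I-{i}. \<Sum>w\<in>W j. F j w)"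
proof -
  define F' where "F' j w = (if j = i then F i w * G w else F j w)" for j w
  have eq: "(\<Prod>j\<in>I. F j (a j)) * G (a i) = (\<Prod>j\<in>I. F' j (a j))" for a
  proof -
    have "(\<Prod>j\<in>I. F' j (a j)) = F' i (a i) * (\<Prod>j\<in>I-{i}. F' j (a j))" by (rule prod.remove[OF fin i])
    also have "(\<Prod>j\<in>I-{i}. F' j (a j)) = (\<Prod>j\<in>I-{i}. F j (a j))" by (rule prod.cong, auto simp: F'_def)
    also have "(\<Prod>j\<in>I. F j (a j)) = F i (a i) * (\<Prod>j\<in>I-{i}. F j (a j))" by (rule prod.remove[OF fin i])
    ultimately show ?thesis by (simp add: F'_def mult_ac)
  qed
  have "(\<Sum>a\<in>PiE I W. (\<Prod>j\<in>I. F j (a j)) * G (a i)) = (\<Sum>a\<in>PiE I W. \<Prod>j\<in>I. F' j (a j))"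
    by (simp add: eq)
  also have "\<dots> = (\<Prod>j\<in>I. \<Sum>w\<in>W j. F' j w)" using prod_sum_PiE[OF fin finW, where f=F'] by simp
  also have "\<dots> = (\<Sum>w\<in>W i. F' i w) * (\<Prod>j\<in>I-{i}. \<Sum>w\<in>W j. F' j w)" by (rule prod.remove[OF fin i])
  also have "(\<Prod>j\<in>I-{i}. \<Sum>w\<in>W j. F' j w) = (\<Prod>j\<in>I-{i}. \<Sum>w\<in>W j. F j w)" by (rule prod.cong, auto simp: F'_def)
  finally show ?thesis by (simp add: F'_def)
qed

lemma prod_if_all:
  assumes "finite J"
  shows "(\<Prod>j\<in>J. if P j then f j else (0::real)) = (if \<forall>j\<in>J. P j then (\<Prod>j\<in>J. f j) else 0)"
proof (cases "\<forall>j\<in>J. P j")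
  case True
  then show ?thesis by (simp cong: prod.cong)
next
  case False
  then obtain j where "j \<in> J" "\<not> P j" by auto
  then show ?thesis using assms False by (auto intro: prod_zero)
qed

lemma PiE_eq_iff_all:
  assumes "a \<in> PiE I W" "a' \<in> PiE I W"
  shows "(a = a') = (\<forall>j\<in>I. a j = a' j)"
proof
  assume h: "\<forall>j\<in>I. a j = a' j"
  show "a = a'"
  proof
    fix j show "a j = a' j"
      using h PiE_arb[OF assms(1), of j] PiE_arb[OF assms(2), of j] by (cases "j \<in> I") auto
  qed
qed simp

locale pset =
  fixes k :: nat and V :: "nat \<Rightarrow> 'a set" and b :: "nat \<Rightarrow> 'a" and d :: "nat \<Rightarrow> 'a \<Rightarrow> 'a \<Rightarrow> real"
  and r :: "nat \<Rightarrow> real"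
  assumes finV: "\<And>j. j < k \<Longrightarrow> finite (V j)"
  and bV: "\<And>j. j < k \<Longrightarrow> b j \<in> V j"
  and rs: "\<And>j y. j < k \<Longrightarrow> y \<in> V j \<Longrightarrow> (\<Sum>z\<in>V j. d j y z) = r j"
begin

definition "X = PiE {..<k} V"
definition "c i = (\<Prod>j\<in>{..<k}-{i}. real (card (V j)))"
definition "Sp x a = (\<Prod>j<k. fb (b j) (a j) (x j))"
definition "Tp a x = (\<Prod>j<k. gb (V j) (b j) (a j) (x j))"
definition "single i a = (\<forall>j<k. j \<noteq> i \<longrightarrow> a j = b j)"
definition "Bp a a' = (\<Sum>i<k. if single i a \<and> single i a' then c i * Bf (V i) (b i) (d i) (a i) (a' i) else 0)"
definition "Df i w y = (\<Sum>z\<in>V i. d i y z * fb (b i) w z)"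

lemma finX: "finite X" unfolding X_def by (rule finite_PiE, auto simp: finV)

lemma XD: "x \<in> X \<Longrightarrow> j < k \<Longrightarrow> x j \<in> V j" unfolding X_def by auto

lemma c_pos: "c i > 0"
  unfolding c_def by (intro prod_pos) (metis DiffD1 bV card_gt_0_iff empty_iff finV lessThan_iff of_nat_0_less_iff)

lemma TS: assumes a: "a \<in> X" and a': "a' \<in> X"
  shows "(\<Sum>x\<in>X. Tp a x * Sp x a') = (if a = a' then 1 else 0)"
proof -
  have "(\<Sum>x\<in>X. Tp a x * Sp x a') = (\<Sum>x\<in>X. \<Prod>j<k. gb (V j) (b j) (a j) (x j) * fb (b j) (a' j) (x j))"
    by (simp add: Tp_def Sp_def prod.distrib)
  also have "\<dots> = (\<Prod>j<k. \<Sum>y\<in>V j. gb (V j) (b j) (a j) y * fb (b j) (a' j) y)"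
    unfolding X_def using prod_sum_PiE[of "{..<k}" V "\<lambda>j y. gb (V j) (b j) (a j) y * fb (b j) (a' j) y"] finV
    by simp
  also have "\<dots> = (\<Prod>j<k. if a j = a' j then 1 else 0)"
    by (rule prod.cong, simp, rule F1, auto simp: finV bV XD a a')
  also have "\<dots> = (if \<forall>j\<in>{..<k}. a j = a' j then 1 else 0)"
    by (subst prod_if_all, auto)
  also have "(\<forall>j\<in>{..<k}. a j = a' j) = (a = a')"
    using PiE_eq_iff_all[of a "{..<k}" V a'] a a' by (simp add: X_def)
  finally show ?thesis .
qed

lemma single_prod: "(\<Prod>j<k. if j = i then 1 else ind (b j) (a j)) = (if single i a then 1 else (0::real))"
proof -
  have "(\<Prod>j<k. if j = i then 1 else ind (b j) (a j)) = (\<Prod>j<k. if j \<noteq> i \<longrightarrow> a j = b j then 1 else (0::real))"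
    by (rule prod.cong, auto simp: ind_def)
  also have "\<dots> = (if single i a then 1 else 0)"
    by (subst prod_if_all, auto simp: single_def)
  finally show ?thesis .
qed

lemma LHS_i: assumes x: "x \<in> X" and a': "a' \<in> X" and i: "i < k"
  shows "(\<Sum>x'\<in>X. d i (x i) (x' i) * Sp x' a') = (if single i a' then c i * Df i (a' i) (x i) else 0)"
proof -
  have "(\<Sum>x'\<in>X. d i (x i) (x' i) * Sp x' a') = (\<Sum>x'\<in>X. (\<Prod>j\<in>{..<k}. fb (b j) (a' j) (x' j)) * d i (x i) (x' i))"
    by (simp add: Sp_def mult.commute)
  also have "\<dots> = (\<Sum>w\<in>V i. fb (b i) (a' i) w * d i (x i) w) * (\<Prod>j\<in>{..<k}-{i}. \<Sum>w\<in>V j. fb (b j) (a' j) w)"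
    unfolding X_def by (rule sum_PiE_prod_one, auto simp: finV i)
  also have "(\<Prod>j\<in>{..<k}-{i}. \<Sum>w\<in>V j. fb (b j) (a' j) w) = (\<Prod>j\<in>{..<k}-{i}. if a' j = b j then real (card (V j)) else 0)"
    by (rule prod.cong, simp, subst F3, auto simp: finV bV XD a')
  also have "\<dots> = (if single i a' then c i else 0)"
    by (subst prod_if_all, auto simp: single_def c_def)
  also have "(\<Sum>w\<in>V i. fb (b i) (a' i) w * d i (x i) w) = Df i (a' i) (x i)"
    by (simp add: Df_def mult.commute)
  finally show ?thesis by simp
qed

lemma RHS_i: assumes x: "x \<in> X" and a': "a' \<in> X" and i: "i < k"
  shows "(\<Sum>a\<in>X. Sp x a * (if single i a \<and> single i a' then c i * Bf (V i) (b i) (d i) (a i) (a' i) else 0))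
     = (if single i a' then c i * Df i (a' i) (x i) else 0)"
proof (cases "single i a'")
  case False
  then show ?thesis by simp
next
  case True
  define F' where "F' j w = fb (b j) w (x j) * (if j = i then 1 else ind (b j) w)" for j w
  define G' where "G' w = Bf (V i) (b i) (d i) w (a' i)" for w
  have eqa: "Sp x a * (if single i a \<and> single i a' then c i * Bf (V i) (b i) (d i) (a i) (a' i) else 0)
      = c i * ((\<Prod>j\<in>{..<k}. F' j (a j)) * G' (a i))" for a
  proof -
    have "(\<Prod>j\<in>{..<k}. F' j (a j)) = Sp x a * (\<Prod>j<k. if j = i then 1 else ind (b j) (a j))"
      by (simp add: F'_def Sp_def prod.distrib)
    also have "\<dots> = Sp x a * (if single i a then 1 else 0)" by (simp add: single_prod)
    finally show ?thesis using True by (simp add: G'_def)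
  qed
  have "(\<Sum>a\<in>X. Sp x a * (if single i a \<and> single i a' then c i * Bf (V i) (b i) (d i) (a i) (a' i) else 0))
     = c i * (\<Sum>a\<in>X. (\<Prod>j\<in>{..<k}. F' j (a j)) * G' (a i))"
    by (simp add: eqa sum_distrib_left)
  also have "(\<Sum>a\<in>X. (\<Prod>j\<in>{..<k}. F' j (a j)) * G' (a i)) = (\<Sum>w\<in>V i. F' i w * G' w) * (\<Prod>j\<in>{..<k}-{i}. \<Sum>w\<in>V j. F' j w)"
    unfolding X_def by (rule sum_PiE_prod_one, auto simp: finV i)
  also have "(\<Prod>j\<in>{..<k}-{i}. \<Sum>w\<in>V j. F' j w) = 1"
  proof (rule prod.neutral, intro ballI)
    fix j assume j: "j \<in> {..<k}-{i}"
    have "(\<Sum>w\<in>V j. F' j w) = (\<Sum>w\<in>V j. fb (b j) w (x j) * ind (b j) w)" using j by (simp add: F'_def)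
    also have "\<dots> = fb (b j) (b j) (x j)" using j by (intro sum_ind', auto simp: finV bV)
    finally show "(\<Sum>w\<in>V j. F' j w) = 1" by (simp add: fb_def)
  qed
  also have "(\<Sum>w\<in>V i. F' i w * G' w) = Df i (a' i) (x i)"
    unfolding Df_def F'_def G'_def using F4[OF finV[OF i] bV[OF i] XD[OF x i] XD[OF a' i]] by simp
  finally show ?thesis using True by simp
qed

lemma AS: assumes x: "x \<in> X" and a': "a' \<in> X"
  shows "(\<Sum>x'\<in>X. (\<Sum>j<k. d j (x j) (x' j)) * Sp x' a') = (\<Sum>a\<in>X. Sp x a * Bp a a')"
proof -
  have "(\<Sum>x'\<in>X. (\<Sum>j<k. d j (x j) (x' j)) * Sp x' a') = (\<Sum>j<k. \<Sum>x'\<in>X. d j (x j) (x' j) * Sp x' a')"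
    by (simp add: sum_distrib_right sum.swap[of _ X])
  also have "\<dots> = (\<Sum>j<k. if single j a' then c j * Df j (a' j) (x j) else 0)"
    by (rule sum.cong, simp, rule LHS_i, auto simp: x a')
  also have "\<dots> = (\<Sum>j<k. \<Sum>a\<in>X. Sp x a * (if single j a \<and> single j a' then c j * Bf (V j) (b j) (d j) (a j) (a' j) else 0))"
    by (rule sum.cong, simp, rule RHS_i[symmetric], auto simp: x a')
  also have "\<dots> = (\<Sum>a\<in>X. Sp x a * Bp a a')"
    by (simp add: Bp_def sum_distrib_left sum.swap[of _ "{..<k}"])
  finally show ?thesis .
qed

end

lemma matX_cong: "(\<And>x y. x \<in> set xs \<Longrightarrow> y \<in> set xs \<Longrightarrow> A x y = A' x y) \<Longrightarrow> matX xs A = matX xs A'"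
  unfolding matX_def by (rule eq_matI, auto)

context pset begin

definition "bb = (\<lambda>j. if j < k then b j else undefined)"
definition "wl i = vertex_list (V i - {b i})"
definition "zl i = map (\<lambda>v. bb(i := v)) (wl i)"
definition "Z = (\<Union>i<k. set (zl i))"
definition "rest = vertex_list (X - {bb} - Z)"
definition "yss = map zl [0..<k] @ [[bb], rest]"

lemma wl: "i < k \<Longrightarrow> distinct (wl i) \<and> set (wl i) = V i - {b i}"
  unfolding wl_def by (rule vertex_list, simp add: finV)

lemma bbX: "bb \<in> X" unfolding X_def bb_def by (rule PiE_I, auto simp: bV)

lemma updX: "i < k \<Longrightarrow> v \<in> V i \<Longrightarrow> bb(i := v) \<in> X"
  using bbX unfolding X_def by (auto simp: PiE_iff extensional_def bb_def)

lemma single_bb: "single l bb" unfolding single_def bb_def by auto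

lemma single_upd: "i < k \<Longrightarrow> l < k \<Longrightarrow> v \<noteq> b i \<Longrightarrow> single l (bb(i := v)) = (l = i)"
  unfolding single_def bb_def by auto

lemma zl_set: "i < k \<Longrightarrow> set (zl i) = (\<lambda>v. bb(i := v)) ` (V i - {b i})"
  unfolding zl_def using wl by auto

lemma zl_distinct: "i < k \<Longrightarrow> distinct (zl i)"
  unfolding zl_def using wl by (auto simp: distinct_map inj_on_def fun_eq_iff)

lemma ZX: "Z \<subseteq> X" unfolding Z_def using zl_set updX by auto

lemma bb_notin_Z: "bb \<notin> Z"
proof
  assume "bb \<in> Z"
  then obtain i v where "i < k" "v \<in> V i" "v \<noteq> b i" "bb = bb(i := v)" unfolding Z_def using zl_set by auto
  then show False by (metis fun_upd_same bb_def)
qed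

lemma rest: "distinct rest \<and> set rest = X - {bb} - Z"
  unfolding rest_def by (rule vertex_list, simp add: finX)

lemma rest_single: assumes y: "y \<in> set rest" and l: "l < k" shows "\<not> single l y"
proof
  assume s: "single l y"
  have yX: "y \<in> X" and yb: "y \<noteq> bb" and yZ: "y \<notin> Z" using y rest by auto
  have yeq: "y = bb(l := y l)"
  proof
    fix j show "y j = (bb(l := y l)) j"
    proof (cases "j < k")
      case True then show ?thesis using s unfolding single_def bb_def by auto
    next
      case False
      have yX': "y \<in> PiE {..<k} V" using yX unfolding X_def .
      have "y j = undefined" using PiE_arb[OF yX', of j] False by simp
      then show ?thesis using False l unfolding bb_def by auto
    qed
  qed
  show False
  proof (cases "y l = b l")
    case True
    then have "y = bb" using yeq l by (metis fun_upd_triv bb_def)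
    then show False using yb by simp
  next
    case False
    have "y l \<in> V l" using XD[OF yX l] .
    then have "y \<in> set (zl l)" using zl_set[OF l] yeq False by auto
    then show False using yZ l unfolding Z_def by auto
  qed
qed

lemma concat_zl: "m \<le> k \<Longrightarrow> distinct (concat (map zl [0..<m])) \<and> set (concat (map zl [0..<m])) = (\<Union>i<m. set (zl i))"
proof (induction m)
  case 0
  then show ?case by simp
next
  case (Suc m)
  have m: "m < k" using Suc.prems by simp
  have disj: "set (zl m) \<inter> (\<Union>i<m. set (zl i)) = {}"
  proof (rule ccontr)
    assume "set (zl m) \<inter> (\<Union>i<m. set (zl i)) \<noteq> {}"
    then obtain i v v' where "i < m" "v \<in> V m - {b m}" "v' \<in> V i - {b i}" "bb(m := v) = bb(i := v')"
      using zl_set m by fastforce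
    then have "v = (bb(i := v')) m" by (metis fun_upd_same)
    then show False using \<open>i < m\<close> \<open>v \<in> V m - {b m}\<close> m by (auto simp: bb_def)
  qed
  have "concat (map zl [0..<Suc m]) = concat (map zl [0..<m]) @ zl m" by simp
  then show ?case using Suc zl_distinct[OF m] disj by (auto simp: lessThan_Suc)
qed

lemma ys: "distinct (concat yss) \<and> set (concat yss) = X"
proof -
  have cz: "distinct (concat (map zl [0..<k]))" "set (concat (map zl [0..<k])) = Z"
    using concat_zl[of k] by (auto simp: Z_def)
  have "concat yss = concat (map zl [0..<k]) @ bb # rest" by (simp add: yss_def)
  then show ?thesis using cz rest bb_notin_Z bbX ZX by auto
qed

lemma Bp_zero: assumes "\<And>l. l < k \<Longrightarrow> \<not> (single l y \<and> single l y') \<or> Bf (V l) (b l) (d l) (y l) (y' l) = 0"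
  shows "Bp y y' = 0"
  unfolding Bp_def by (rule sum.neutral, use assms in auto)

lemma yss_zero: assumes pq: "p < q" "q < length yss" and y: "y \<in> set (yss!p)" and y': "y' \<in> set (yss!q)"
  shows "Bp y y' = 0"
proof (rule Bp_zero)
  fix l assume l: "l < k"
  have len: "length yss = k + 2" by (simp add: yss_def)
  show "\<not> (single l y \<and> single l y') \<or> Bf (V l) (b l) (d l) (y l) (y' l) = 0"
  proof (cases "q = k + 1")
    case True
    then have "y' \<in> set rest" using y' by (simp add: yss_def nth_append)
    then show ?thesis using rest_single l by blast
  next
    case False
    then have q: "q \<le> k" using pq len by simp
    have p: "p < k" using pq q by simp
    have "yss ! p = zl p" using p by (simp add: yss_def nth_append)
    then obtain v where v: "v \<in> V p" "v \<noteq> b p" "y = bb(p := v)" using y zl_set[OF p] by auto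
    have sy: "single l y = (l = p)" using single_upd[OF p l v(2)] v by simp
    show ?thesis
    proof (cases "q = k")
      case True
      then have "y' = bb" using y' by (simp add: yss_def nth_append)
      then have "Bf (V p) (b p) (d p) (y p) (y' p) = 0"
        using F5[OF finV[OF p] bV[OF p] v(1) rs] v p by (simp add: bb_def)
      then show ?thesis using sy by auto
    next
      case False
      then have q': "q < k" using q by simp
      have "yss ! q = zl q" using q' by (simp add: yss_def nth_append)
      then obtain v' where v': "v' \<in> V q" "v' \<noteq> b q" "y' = bb(q := v')" using y' zl_set[OF q'] by auto
      have "single l y' = (l = q)" using single_upd[OF q' l v'(2)] v' by simp
      then show ?thesis using sy pq by auto
    qed
  qed
qed

lemma zl_mat: assumes i: "i < k"
  shows "matX (zl i) Bp = c i \<cdot>\<^sub>m matX (wl i) (Bf (V i) (b i) (d i))"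
proof (rule eq_matI)
  fix p q assume "p < dim_row (c i \<cdot>\<^sub>m matX (wl i) (Bf (V i) (b i) (d i)))"
    "q < dim_col (c i \<cdot>\<^sub>m matX (wl i) (Bf (V i) (b i) (d i)))"
  then have pq: "p < length (wl i)" "q < length (wl i)" by (auto simp: matX_def)
  let ?v = "wl i ! p" and ?w = "wl i ! q"
  have v: "?v \<noteq> b i" "?w \<noteq> b i" using wl[OF i] pq by (auto dest: nth_mem)
  have "Bp (bb(i := ?v)) (bb(i := ?w)) = (\<Sum>l<k. if l = i then c i * Bf (V i) (b i) (d i) ?v ?w else 0)"
    unfolding Bp_def by (rule sum.cong, auto simp: single_upd[OF i _ v(1)] single_upd[OF i _ v(2)])
  also have "\<dots> = c i * Bf (V i) (b i) (d i) ?v ?w" using i by simp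
  finally show "matX (zl i) Bp $$ (p, q) = (c i \<cdot>\<^sub>m matX (wl i) (Bf (V i) (b i) (d i))) $$ (p, q)"
    using pq by (simp add: matX_def zl_def)
qed (auto simp: matX_def zl_def)

lemma Bp_bb: "Bp bb bb = (\<Sum>l<k. c l * r l)"
  unfolding Bp_def
proof (rule sum.cong)
  fix l assume "l \<in> {..<k}" then have l: "l < k" by simp
  have "bb l = b l" using l by (simp add: bb_def)
  then show "(if single l bb \<and> single l bb then c l * Bf (V l) (b l) (d l) (bb l) (bb l) else 0) = c l * r l"
    using F5[OF finV[OF l] bV[OF l] bV[OF l] rs[OF l]] single_bb by simp
qed simp

lemma charpoly_prod:
  assumes A: "\<And>x x'. x \<in> X \<Longrightarrow> x' \<in> X \<Longrightarrow> A x x' = (\<Sum>j<k. d j (x j) (x' j))"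
  and xs: "distinct xs" "set xs = X"
  shows "char_poly (matX xs A) = prod_list (map (\<lambda>ys. char_poly (matX ys Bp)) yss)"
proof -
  have len: "length xs = length (concat yss)"
    using distinct_card[OF xs(1)] distinct_card[of "concat yss"] ys xs(2) by simp
  have "char_poly (matX xs A) = char_poly (matX (concat yss) Bp)"
  proof (rule char_poly_sim[OF xs(1) _ len, where T = Tp and S = Sp])
    show "distinct (concat yss)" using ys by simp
    fix y y' assume "y \<in> set (concat yss)" "y' \<in> set (concat yss)"
    then have "y \<in> X" "y' \<in> X" using ys by auto
    then show "(\<Sum>x\<in>set xs. Tp y x * Sp x y') = (if y = y' then 1 else 0)" using TS ys xs by simp
  next
    fix x y assume xy: "x \<in> set xs" "y \<in> set (concat yss)"
    have xX: "x \<in> X" and yX: "y \<in> X" using xy xs ys by auto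
    have "(\<Sum>x'\<in>set xs. A x x' * Sp x' y) = (\<Sum>x'\<in>X. (\<Sum>j<k. d j (x j) (x' j)) * Sp x' y)"
      using xX xs A by simp
    also have "\<dots> = (\<Sum>a\<in>X. Sp x a * Bp a y)" by (rule AS[OF xX yX])
    finally show "(\<Sum>x'\<in>set xs. A x x' * Sp x' y) = (\<Sum>y'\<in>set (concat yss). Sp x y' * Bp y' y)"
      using ys by simp
  qed
  also have "\<dots> = prod_list (map (\<lambda>ys. char_poly (matX ys Bp)) yss)"
    by (rule char_poly_matX_concat, rule yss_zero)
  finally show ?thesis .
qed

lemma cnt_prod:
  assumes A: "\<And>x x'. x \<in> X \<Longrightarrow> x' \<in> X \<Longrightarrow> A x x' = (\<Sum>j<k. d j (x j) (x' j))"
  and xs: "distinct xs" "set xs = X"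
  and P: "\<And>r c. c > 0 \<Longrightarrow> P (c * r) = P r"
  shows "cnt P (char_poly (matX xs A)) = (\<Sum>i<k. cnt P (char_poly (matX (wl i) (Bf (V i) (b i) (d i)))))
     + (if P (\<Sum>l<k. c l * r l) then 1 else 0) + cnt P (char_poly (matX rest Bp))"
proof -
  have nz: "\<And>p. p \<in> set (map (\<lambda>ys. char_poly (matX ys Bp)) yss) \<Longrightarrow> p \<noteq> 0"
    using char_poly_nz[OF matX_carrier] by auto
  have "cnt P (char_poly (matX xs A)) = cnt P (prod_list (map (\<lambda>ys. char_poly (matX ys Bp)) yss))"
    by (simp only: charpoly_prod[OF A xs])
  also have "\<dots> = sum_list (map (cnt P) (map (\<lambda>ys. char_poly (matX ys Bp)) yss))"
    by (rule cnt_prod_list[OF nz])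
  also have "\<dots> = (\<Sum>i<k. cnt P (char_poly (matX (zl i) Bp))) + cnt P (char_poly (matX [bb] Bp)) + cnt P (char_poly (matX rest Bp))"
    by (simp add: yss_def comp_def interv_sum_list_conv_sum_set_nat atLeast0LessThan)
  also have "(\<Sum>i<k. cnt P (char_poly (matX (zl i) Bp))) = (\<Sum>i<k. cnt P (char_poly (matX (wl i) (Bf (V i) (b i) (d i)))))"
  proof (rule sum.cong)
    fix i assume "i \<in> {..<k}"
    then have i: "i < k" by simp
    show "cnt P (char_poly (matX (zl i) Bp)) = cnt P (char_poly (matX (wl i) (Bf (V i) (b i) (d i))))"
      unfolding zl_mat[OF i] by (rule cnt_char_poly_smult[OF matX_carrier c_pos], rule P[OF c_pos])
  qed simp
  also have "cnt P (char_poly (matX [bb] Bp)) = (if P (\<Sum>l<k. c l * r l) then 1 else 0)"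
    by (simp add: char_poly_1x1 Bp_bb cnt_linear)
  finally show ?thesis .
qed

end

lemma dist_matrix_matX: "dist_matrix V E = matX (vertex_list V) (\<lambda>u w. real (gdist V E u w))"
  by (simp add: dist_matrix_def matX_def Let_def)

lemma row_sums:
  assumes c: "connected_graph V E" and cr: "const_row_sums (dist_matrix V E)"
  shows "\<exists>r. \<forall>y\<in>V. (\<Sum>z\<in>V. real (gdist V E y z)) = r"
proof -
  have fin: "finite V" using c by (simp add: connected_graph_def simple_graph_def)
  note vl = vertex_list[OF fin]
  from cr obtain r where r: "\<forall>i < dim_row (dist_matrix V E). (\<Sum>j < dim_col (dist_matrix V E). dist_matrix V E $$ (i, j)) = r"
    unfolding const_row_sums_def by blast
  have "\<forall>y\<in>V. (\<Sum>z\<in>V. real (gdist V E y z)) = r"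
  proof
    fix y assume y: "y \<in> V"
    then obtain i where i: "i < length (vertex_list V)" "vertex_list V ! i = y" using vl by (metis in_set_conv_nth)
    have "(\<Sum>j < length (vertex_list V). real (gdist V E (vertex_list V ! i) (vertex_list V ! j))) = r"
      using r i(1) by (simp add: dist_matrix_matX matX_def)
    then have "(\<Sum>j < length (vertex_list V). real (gdist V E y (vertex_list V ! j))) = r"
      using i(2) by simp
    then show "(\<Sum>z\<in>V. real (gdist V E y z)) = r" using sum_nth_distinct[of "vertex_list V" "\<lambda>z. real (gdist V E y z)"] vl by simp
  qed
  then show ?thesis by blast
qed

theorem lemma4:
  fixes k :: nat and V :: "nat \<Rightarrow> 'a set" and E :: "nat \<Rightarrow> 'a \<Rightarrow> 'a \<Rightarrow> bool"
  assumes "k \<ge> 1"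
    and "\<And>i. i < k \<Longrightarrow> connected_graph (V i) (E i)"
    and "\<And>i. i < k \<Longrightarrow> const_row_sums (dist_matrix (V i) (E i))"
  shows "n_minus (dist_matrix (prod_vertices k V) (prod_edges k V E))
           \<ge> (\<Sum>i<k. n_minus (dist_matrix (V i) (E i))) \<and>
         int (n_plus (dist_matrix (prod_vertices k V) (prod_edges k V E)))
           \<ge> 1 + (\<Sum>i<k. int (n_plus (dist_matrix (V i) (E i))) - 1)"
proof -
  note k1 = assms(1) and conn = assms(2) and crs = assms(3)
  define d where "d j u w = real (gdist (V j) (E j) u w)" for j u w
  define b where "b j = (SOME v. v \<in> V j)" for j
  have finV: "\<And>j. j < k \<Longrightarrow> finite (V j)" using conn by (simp add: connected_graph_def simple_graph_def)
  have bV: "\<And>j. j < k \<Longrightarrow> b j \<in> V j" unfolding b_def using conn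
    by (metis connected_graph_def some_in_eq)
  have "\<forall>j. \<exists>c. j < k \<longrightarrow> (\<forall>y\<in>V j. (\<Sum>z\<in>V j. d j y z) = c)"
    using row_sums[OF conn crs] by (auto simp: d_def)
  then obtain r where r: "\<And>j. j < k \<Longrightarrow> \<forall>y\<in>V j. (\<Sum>z\<in>V j. d j y z) = r j" by metis
  interpret pset k V b d r
    by (unfold_locales, auto simp: finV bV r)
  have r0: "r j \<ge> 0" if j: "j < k" for j
    using r[OF j] bV[OF j] by (metis d_def of_nat_0_le_iff sum_nonneg)
  let ?D = "dist_matrix (prod_vertices k V) (prod_edges k V E)"
  let ?M = "\<lambda>i. matX (wl i) (Bf (V i) (b i) (d i))"
  have XX: "prod_vertices k V = X" by (simp add: X_def prod_vertices_def)
  have xs: "distinct (vertex_list X)" "set (vertex_list X) = X" using vertex_list[OF finX] by auto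
  have Aeq: "real (gdist X (prod_edges k V E) x x') = (\<Sum>j<k. d j (x j) (x' j))"
    if xx: "x \<in> X" "x' \<in> X" for x x'
  proof -
    have "gdist (prod_vertices k V) (prod_edges k V E) x x' = (\<Sum>j<k. gdist (V j) (E j) (x j) (x' j))"
      by (rule gdist_prod, rule conn, auto simp: XX xx)
    then show ?thesis using XX by (simp add: d_def)
  qed
  have Dcnt: "cnt P (char_poly ?D) = (\<Sum>i<k. cnt P (char_poly (?M i))) + (if P (\<Sum>l<k. c l * r l) then 1 else 0)
      + cnt P (char_poly (matX rest Bp))" if P: "\<And>r c. c > 0 \<Longrightarrow> P (c * r) = P r" for P
    unfolding dist_matrix_matX XX by (rule cnt_prod[OF Aeq xs P])
  have Fcnt: "cnt P (char_poly (dist_matrix (V i) (E i))) = cnt P (char_poly (?M i)) + (if P (r i) then 1 else 0)"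
    if i: "i < k" for i P
  proof -
    have dm: "dist_matrix (V i) (E i) = matX (vertex_list (V i)) (d i)"
    proof -
      have "d i = (\<lambda>u w. real (gdist (V i) (E i) u w))" by (rule ext, rule ext, simp add: d_def)
      then show ?thesis unfolding dist_matrix_matX by simp
    qed
    have "char_poly (dist_matrix (V i) (E i)) = char_poly (?M i) * [:-r i, 1:]"
      unfolding dm
      by (rule factor_char_poly[OF finV[OF i] bV[OF i] _ vertex_list[OF finV[OF i], THEN conjunct1]
          vertex_list[OF finV[OF i], THEN conjunct2] wl[OF i, THEN conjunct1] wl[OF i, THEN conjunct2]],
          use r[OF i] in \<open>simp add: d_def\<close>)
    moreover have nz: "[:-r i, 1:] \<noteq> 0" by simp
    ultimately have "cnt P (char_poly (dist_matrix (V i) (E i))) = cnt P (char_poly (?M i)) + cnt P [:-r i, 1:]"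
      using cnt_mult[OF char_poly_nz[OF matX_carrier] nz, where P=P] by simp
    then show ?thesis by (simp only: cnt_linear)
  qed
  have Pneg: "\<And>r c. c > 0 \<Longrightarrow> (c * r < 0) = (r < (0::real))" by (simp add: mult_less_0_iff)
  have Ppos: "\<And>r c. c > 0 \<Longrightarrow> (c * r > 0) = (r > (0::real))" by (simp add: zero_less_mult_iff)
  have part1: "n_minus ?D \<ge> (\<Sum>i<k. n_minus (dist_matrix (V i) (E i)))"
  proof -
    have "(\<Sum>i<k. n_minus (dist_matrix (V i) (E i))) = (\<Sum>i<k. cnt (\<lambda>r. r < 0) (char_poly (?M i)))"
      unfolding n_minus_cnt by (rule sum.cong, simp, subst Fcnt, auto dest: r0)
    also have "\<dots> \<le> n_minus ?D"
    proof -
      have "n_minus ?D = (\<Sum>i<k. cnt (\<lambda>r. r < 0) (char_poly (?M i))) + (if (\<Sum>l<k. c l * r l) < 0 then 1 else 0)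
         + cnt (\<lambda>r. r < 0) (char_poly (matX rest Bp))"
        unfolding n_minus_cnt by (rule Dcnt, rule Pneg)
      then show ?thesis by simp
    qed
    finally show ?thesis .
  qed
  let ?p = "\<lambda>i. cnt (\<lambda>r. r > 0) (char_poly (?M i))"
  have np: "int (n_plus ?D) \<ge> (\<Sum>i<k. int (?p i)) + (if (\<Sum>l<k. c l * r l) > 0 then 1 else 0)"
  proof -
    have "n_plus ?D = (\<Sum>i<k. ?p i) + (if (\<Sum>l<k. c l * r l) > 0 then 1 else 0)
         + cnt (\<lambda>r. r > 0) (char_poly (matX rest Bp))"
      unfolding n_plus_cnt by (rule Dcnt, rule Ppos)
    then show ?thesis by (simp add: of_nat_sum)
  qed
  have npi: "int (n_plus (dist_matrix (V i) (E i))) = int (?p i) + (if r i > 0 then 1 else 0)" if "i < k" for i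
    unfolding n_plus_cnt Fcnt[OF that] by simp
  have part2: "int (n_plus ?D) \<ge> 1 + (\<Sum>i<k. int (n_plus (dist_matrix (V i) (E i))) - 1)"
  proof (cases "(\<Sum>l<k. c l * r l) > 0")
    case True
    have "(\<Sum>i<k. int (n_plus (dist_matrix (V i) (E i))) - 1) \<le> (\<Sum>i<k. int (?p i))"
      by (rule sum_mono, simp add: npi)
    then show ?thesis using np True by simp
  next
    case False
    have rz: "\<not> r i > 0" if i: "i < k" for i
    proof
      assume ri: "r i > 0"
      have "c i * r i \<le> (\<Sum>l<k. c l * r l)"
        using i by (intro member_le_sum, auto intro!: mult_nonneg_nonneg less_imp_le[OF c_pos] r0)
      moreover have "c i * r i > 0" using c_pos ri by simp
      ultimately show False using False by simp
    qed
    have "(\<Sum>i<k. int (n_plus (dist_matrix (V i) (E i))) - 1) = (\<Sum>i<k. int (?p i)) - int k"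
      by (simp add: npi rz sum_subtractf)
    then show ?thesis using np False k1 by simp
  qed
  show ?thesis using part1 part2 by simp
qed

end
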